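(* Let $m,n\in\mathbb N$, $M_A=M_m(\mathbb C)$, $M_B=M_n(\mathbb C)$, let $U_A\in M_A$, $U_B\in M_B$ be unitary matrices, and let $\{e_{ij}:1\le i,j\le m\}$ be the matrix units of $M_m(\mathbb C)$. A linear map $\psi:M_A\to M_B$ is $(U_A,U_B)$-CP if and only if the block matrix $[U_B^*\psi(U_Ae_{ij})]_{1\le i,j\le m}\in M_m(M_n(\mathbb C))$ is positive semidefinite.
   Context: For $k\in\mathbb N$ and a unitary $U$, write $U^k=\mathrm{diag}(U,\dots,U)$. A linear map $\psi:M_A\to M_B$ is $(U_A,U_B)$-CP if for every $k\in\mathbb N$ and every $V=[V_{ij}]\in M_k(M_A)$ with $(U_A^k)^*V\ge0$, one has $(U_B^k)^*[\psi(V_{ij})]\ge0$. *)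

theory Defs
  imports "Jordan_Normal_Form.Matrix"
begin

definition adj :: "complex mat \<Rightarrow> complex mat" where
  "adj A = mat (dim_col A) (dim_row A) (\<lambda>(i,j). cnj (A $$ (j,i)))"

definition unitary_mat :: "nat \<Rightarrow> complex mat \<Rightarrow> bool" where
  "unitary_mat n U \<longleftrightarrow> U \<in> carrier_mat n n \<and> adj U * U = 1\<^sub>m n \<and> U * adj U = 1\<^sub>m n"

definition psd :: "nat \<Rightarrow> complex mat \<Rightarrow> bool" where
  "psd N X \<longleftrightarrow> X \<in> carrier_mat N N \<and> adj X = X \<and>
     (\<forall>v :: nat \<Rightarrow> complex. 0 \<le> Re (\<Sum>i<N. \<Sum>j<N. cnj (v i) * X $$ (i,j) * v j))"

definition block :: "nat \<Rightarrow> nat \<Rightarrow> (nat \<Rightarrow> nat \<Rightarrow> complex mat) \<Rightarrow> complex mat" where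
  "block k m V = mat (k*m) (k*m) (\<lambda>(i,j). V (i div m) (j div m) $$ (i mod m, j mod m))"

(* U^k = diag(U,...,U), k copies *)
definition blockdiag :: "nat \<Rightarrow> nat \<Rightarrow> complex mat \<Rightarrow> complex mat" where
  "blockdiag k m U = block k m (\<lambda>i j. if i = j then U else 0\<^sub>m m m)"

(* matrix unit e_ij in M_m (0-based indices) *)
definition unit_mat :: "nat \<Rightarrow> nat \<Rightarrow> nat \<Rightarrow> complex mat" where
  "unit_mat m i j = mat m m (\<lambda>(a,b). if a = i \<and> b = j then 1 else 0)"

definition lin_map :: "nat \<Rightarrow> nat \<Rightarrow> (complex mat \<Rightarrow> complex mat) \<Rightarrow> bool" where
  "lin_map m n \<psi> \<longleftrightarrow>
     (\<forall>A \<in> carrier_mat m m. \<psi> A \<in> carrier_mat n n) \<and>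
     (\<forall>A \<in> carrier_mat m m. \<forall>B \<in> carrier_mat m m. \<psi> (A + B) = \<psi> A + \<psi> B) \<and>
     (\<forall>c. \<forall>A \<in> carrier_mat m m. \<psi> (c \<cdot>\<^sub>m A) = c \<cdot>\<^sub>m \<psi> A)"

definition UCP :: "nat \<Rightarrow> nat \<Rightarrow> complex mat \<Rightarrow> complex mat \<Rightarrow> (complex mat \<Rightarrow> complex mat) \<Rightarrow> bool" where
  "UCP m n UA UB \<psi> \<longleftrightarrow>
     (\<forall>k. \<forall>V :: nat \<Rightarrow> nat \<Rightarrow> complex mat.
        (\<forall>i<k. \<forall>j<k. V i j \<in> carrier_mat m m) \<and>
        psd (k*m) (adj (blockdiag k m UA) * block k m V) \<longrightarrow>
        psd (k*n) (adj (blockdiag k n UB) * block k n (\<lambda>i j. \<psi> (V i j))))"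

end

theory Submission
  imports Defs
begin


definition qf :: "nat set \<Rightarrow> (nat \<Rightarrow> nat \<Rightarrow> complex) \<Rightarrow> (nat \<Rightarrow> complex) \<Rightarrow> complex" where
  "qf S X v = (\<Sum>i\<in>S. \<Sum>j\<in>S. cnj (v i) * X i j * v j)"

definition psdf :: "nat set \<Rightarrow> (nat \<Rightarrow> nat \<Rightarrow> complex) \<Rightarrow> bool" where
  "psdf S X \<longleftrightarrow> (\<forall>i\<in>S. \<forall>j\<in>S. X j i = cnj (X i j)) \<and> (\<forall>v. 0 \<le> Re (qf S X v))"

lemma qf_insert:
  assumes "finite S" "x \<notin> S"
  shows "qf (insert x S) X v = qf S X v + cnj (v x) * (\<Sum>j\<in>S. X x j * v j)
     + (\<Sum>i\<in>S. cnj (v i) * X i x) * v x + cnj (v x) * X x x * v x"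
  using assms by (simp add: qf_def sum.distrib sum_distrib_left sum_distrib_right algebra_simps)

lemma qf_restrict:
  assumes "finite S" "T \<subseteq> S" "\<forall>i\<in>S-T. v i = 0"
  shows "qf S X v = qf T X v"
proof -
  have "qf S X v = (\<Sum>i\<in>T. \<Sum>j\<in>S. cnj (v i) * X i j * v j)"
    unfolding qf_def by (rule sum.mono_neutral_right, use assms in auto)
  also have "\<dots> = qf T X v" unfolding qf_def
    by (rule sum.cong[OF refl], rule sum.mono_neutral_right, use assms in auto)
  finally show ?thesis .
qed

lemma qf_delta:
  assumes "finite S" "x \<in> S"
  shows "qf S X (\<lambda>i. if i = x then 1 else 0) = X x x"
  using assms by (subst qf_restrict[where T="{x}"]) (auto simp: qf_def)

lemma qf_two:
  assumes "finite S" "x \<in> S" "j \<in> S" "x \<noteq> j"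
  shows "qf S X (\<lambda>i. if i = x then a else if i = j then b else 0) =
     cnj a * X x x * a + cnj a * X x j * b + cnj b * X j x * a + cnj b * X j j * b"
  using assms
  by (subst qf_restrict[where T="{x,j}"]) (auto simp: qf_def)


lemma psdf_decomp:
  assumes "finite S" "psdf S X"
  shows "\<exists>(N::nat) cs. \<forall>i\<in>S. \<forall>j\<in>S. X i j = (\<Sum>r<N. cs r i * cnj (cs r j))"
  using assms
proof (induction S arbitrary: X rule: finite_induct)
  case empty
  then show ?case by auto
next
  case (insert x S)
  have herm: "\<And>i j. i \<in> insert x S \<Longrightarrow> j \<in> insert x S \<Longrightarrow> X j i = cnj (X i j)"
    using insert.prems unfolding psdf_def by auto
  have pos: "\<And>v. 0 \<le> Re (qf (insert x S) X v)"
    using insert.prems unfolding psdf_def by auto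
  define d where "d = X x x"
  have dreal: "d = of_real (Re d)"
    using herm[of x x] unfolding d_def by (simp add: complex_eq_iff)
  have dpos: "0 \<le> Re d"
    using pos[of "\<lambda>i. if i = x then 1 else 0"] qf_delta[of "insert x S" x X] insert.hyps
    unfolding d_def by auto
  define s where "s = sqrt (Re d)"
  define c where "c i = (if Re d = 0 then 0 else X i x / of_real s)" for i
  have F1: "X x j = c x * cnj (c j)" if j: "j \<in> insert x S" for j
  proof (cases "Re d = 0")
    case True
    then have d0: "X x x = 0" using dreal d_def by simp
    have "X x j = 0"
    proof (cases "j = x")
      case True then show ?thesis using d0 by simp
    next
      case False
      then have jS: "j \<in> S" using j by auto
      show ?thesis
      proof (rule ccontr)
        assume z0: "X x j \<noteq> 0"
        define z where "z = X x j"
        define R where "R = (Re (X j j) + 1) / (2 * (cmod z)^2)"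
        have zpos: "cmod z > 0" using z0 z_def by simp
        define t where "t = - (of_real R) * z"
        have hz: "X j x = cnj z" using herm[of x j] jS z_def by simp
        have zz: "cnj z * z = of_real ((cmod z)^2)"
          by (metis complex_norm_square mult.commute of_real_power)
        have "qf (insert x S) X (\<lambda>i. if i = x then t else if i = j then 1 else 0) =
           cnj t * X x x * t + cnj t * X x j * 1 + cnj 1 * X j x * t + cnj 1 * X j j * 1"
          using qf_two[of "insert x S" x j X t 1] insert.hyps jS False by auto
        also have "\<dots> = X j j - of_real (2 * R * (cmod z)^2)"
          using d0 hz zz unfolding t_def z_def[symmetric]
          by (simp add: algebra_simps)
        finally have qq: "qf (insert x S) X (\<lambda>i. if i = x then t else if i = j then 1 else 0) = X j j - of_real (2 * R * (cmod z)^2)" .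
        have "2 * R * (cmod z)^2 = Re (X j j) + 1" using zpos unfolding R_def by simp
        then have "Re (qf (insert x S) X (\<lambda>i. if i = x then t else if i = j then 1 else 0)) = -1"
          unfolding qq by simp
        then show False using pos by (metis neg_0_le_iff_le not_one_le_zero)
      qed
    qed
    then show ?thesis using True c_def by simp
  next
    case False
    then have sp: "s > 0" using dpos s_def by simp
    have cx: "c x = of_real s"
    proof -
      have "X x x = of_real (Re d)" using dreal d_def by simp
      then have "c x = of_real (Re d / sqrt (Re d))" using False unfolding c_def s_def by simp
      then show ?thesis using real_div_sqrt[OF dpos] s_def by simp
    qed
    have "c x * cnj (c j) = cnj (X j x)"
      using cx sp False unfolding c_def by simp
    then show ?thesis using herm[of j x] j insert.hyps by simp
  qed
  have F2: "X i x = c i * cnj (c x)" if i: "i \<in> insert x S" for i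
    using F1[OF i] herm[of x i] i by simp
  have cx0: "c i = 0" if "c x = 0" for i
  proof (cases "Re d = 0")
    case True then show ?thesis by (simp add: c_def)
  next
    case False
    have "X x x \<noteq> 0" using False d_def by auto
    moreover have "s \<noteq> 0" using False dpos s_def by simp
    ultimately have "c x \<noteq> 0" using False unfolding c_def by simp
    then show ?thesis using that by simp
  qed
  define Y where "Y i j = X i j - c i * cnj (c j)" for i j
  have psY: "psdf S Y"
    unfolding psdf_def
  proof (intro conjI ballI allI)
    fix i j assume "i \<in> S" "j \<in> S"
    then show "Y j i = cnj (Y i j)" unfolding Y_def using herm[of i j] by simp
  next
    fix v
    define \<gamma> where "\<gamma> = (\<Sum>i\<in>S. cnj (v i) * c i)"
    define w where "w = - cnj \<gamma> / cnj (c x)"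
    define v' where "v' = v(x := w)"
    have cg: "cnj \<gamma> = (\<Sum>j\<in>S. cnj (c j) * v j)"
      unfolding \<gamma>_def by (simp add: mult.commute)
    have gg: "\<gamma> * cnj \<gamma> = (\<Sum>i\<in>S. \<Sum>j\<in>S. cnj (v i) * c i * (cnj (c j) * v j))"
      unfolding cg unfolding \<gamma>_def sum_product ..
    have e1: "qf S Y v = qf S X v - \<gamma> * cnj \<gamma>"
      unfolding qf_def Y_def gg
      by (simp add: algebra_simps sum_subtractf)
    have q1: "qf S X v' = qf S X v"
      unfolding qf_def v'_def using insert.hyps
      by (intro sum.cong refl) auto
    have q2: "(\<Sum>j\<in>S. X x j * v' j) = c x * cnj \<gamma>"
      unfolding cg sum_distrib_left v'_def using insert.hyps F1
      by (intro sum.cong refl) (auto simp: mult.assoc)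
    have q3: "(\<Sum>i\<in>S. cnj (v' i) * X i x) = \<gamma> * cnj (c x)"
      unfolding \<gamma>_def sum_distrib_right v'_def using insert.hyps F2
      by (intro sum.cong refl) (auto simp: mult.assoc)
    have e2: "qf (insert x S) X v' = qf S X v - \<gamma> * cnj \<gamma>"
    proof (cases "c x = 0")
      case True
      then have "\<gamma> = 0" unfolding \<gamma>_def using cx0 by simp
      then show ?thesis
        using qf_insert[OF insert.hyps(1,2), of X v'] q1 q2 q3 True F1[of x]
        by (simp add: v'_def w_def)
    next
      case False
      have w1: "cnj (c x) * w = - cnj \<gamma>" using False unfolding w_def by simp
      have w2: "cnj w * c x = - \<gamma>" using False unfolding w_def by simp
      have "qf (insert x S) X v' = qf S X v + cnj w * (c x * cnj \<gamma>) + \<gamma> * cnj (c x) * w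
          + cnj w * (c x * cnj (c x)) * w"
        using qf_insert[OF insert.hyps(1,2), of X v'] q1 q2 q3 F1[of x]
        by (simp add: v'_def)
      also have "\<dots> = qf S X v + (cnj w * c x) * cnj \<gamma> + \<gamma> * (cnj (c x) * w)
          + (cnj w * c x) * (cnj (c x) * w)" by (simp add: algebra_simps)
      also have "\<dots> = qf S X v - \<gamma> * cnj \<gamma>" unfolding w1 w2 by (simp add: algebra_simps)
      finally show ?thesis .
    qed
    show "0 \<le> Re (qf S Y v)" using e1 e2 pos[of v'] by simp
  qed
  obtain N :: nat and cs where cs: "\<forall>i\<in>S. \<forall>j\<in>S. Y i j = (\<Sum>r<N. cs r i * cnj (cs r j))"
    using insert.IH[OF psY] by (elim exE) auto
  define cs' where "cs' r i = (if r < N then (if i = x then 0 else cs r i) else c i)" for r i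
  have "\<forall>i\<in>insert x S. \<forall>j\<in>insert x S. X i j = (\<Sum>r<Suc N. cs' r i * cnj (cs' r j))"
  proof (intro ballI)
    fix i j assume i: "i \<in> insert x S" and j: "j \<in> insert x S"
    have s: "(\<Sum>r<Suc N. cs' r i * cnj (cs' r j)) =
        (\<Sum>r<N. cs' r i * cnj (cs' r j)) + c i * cnj (c j)"
      by (simp add: cs'_def)
    show "X i j = (\<Sum>r<Suc N. cs' r i * cnj (cs' r j))"
    proof (cases "i = x \<or> j = x")
      case True
      then have "(\<Sum>r<N. cs' r i * cnj (cs' r j)) = 0" by (auto simp: cs'_def)
      then show ?thesis using s True F1[OF j] F2[OF i] by auto
    next
      case False
      then have "i \<in> S" "j \<in> S" using i j by auto
      then have "(\<Sum>r<N. cs' r i * cnj (cs' r j)) = Y i j"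
        using cs False by (auto simp: cs'_def)
      then show ?thesis using s by (simp add: Y_def)
    qed
  qed
  then show ?case by blast
qed



lemma sum_add_range: "(\<Sum>I<a+(n::nat). f I) = (\<Sum>I<a. f I) + (\<Sum>p<n. f (a+p))"
  by (induction n) (simp_all add: add_ac)

lemma sum_split: "(\<Sum>I<(k::nat)*n. f I) = (\<Sum>i<k. \<Sum>p<n. f (i*n+p))"
proof (induction k)
  case 0 then show ?case by simp
next
  case (Suc k)
  have "(\<Sum>I<Suc k*n. f I) = (\<Sum>I<k*n + n. f I)" by (simp add: add.commute)
  also have "\<dots> = (\<Sum>I<k*n. f I) + (\<Sum>p<n. f (k*n+p))" by (rule sum_add_range)
  finally show ?case using Suc by simp
qed

lemma mult_entry:
  assumes "A \<in> carrier_mat r s" "B \<in> carrier_mat s t" "i < r" "j < t"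
  shows "(A*B) $$ (i,j) = (\<Sum>a<s. A$$(i,a) * B$$(a,j))"
  using assms by (auto simp: scalar_prod_def atLeast0LessThan intro!: sum.cong)

lemma adj_carrier: "A \<in> carrier_mat r s \<Longrightarrow> adj A \<in> carrier_mat s r"
  by (auto simp: adj_def)

lemma adj_entry: "A \<in> carrier_mat r s \<Longrightarrow> i < s \<Longrightarrow> j < r \<Longrightarrow> adj A $$ (i,j) = cnj (A $$ (j,i))"
  by (auto simp: adj_def)

lemma psd_iff: "psd N A \<longleftrightarrow> A \<in> carrier_mat N N \<and> psdf {..<N} (\<lambda>i j. A $$ (i,j))"
proof -
  have "A \<in> carrier_mat N N \<Longrightarrow> adj A = A \<longleftrightarrow> (\<forall>i\<in>{..<N}. \<forall>j\<in>{..<N}. A $$ (j,i) = cnj (A $$ (i,j)))"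
  proof -
    assume A: "A \<in> carrier_mat N N"
    have "adj A = A \<longleftrightarrow> (\<forall>i<N. \<forall>j<N. adj A $$ (i,j) = A $$ (i,j))"
      using A adj_carrier[OF A] by (auto simp: mat_eq_iff)
    also have "\<dots> \<longleftrightarrow> (\<forall>i<N. \<forall>j<N. cnj (A $$ (j,i)) = A $$ (i,j))"
      using A by (simp add: adj_entry)
    also have "\<dots> \<longleftrightarrow> (\<forall>i\<in>{..<N}. \<forall>j\<in>{..<N}. A $$ (j,i) = cnj (A $$ (i,j)))"
    proof -
      have e: "\<And>x y. (cnj x = y) = (x = cnj y)" by auto
      show ?thesis by (simp only: e lessThan_iff Ball_def)
    qed
    finally show ?thesis .
  qed
  then show ?thesis unfolding psd_def psdf_def qf_def by blast
qed

lemma block_carrier: "block k m V \<in> carrier_mat (k*m) (k*m)"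
  by (simp add: block_def)

lemma block_entry: "I < k*m \<Longrightarrow> J < k*m \<Longrightarrow> block k m V $$ (I,J) = V (I div m) (J div m) $$ (I mod m, J mod m)"
  by (simp add: block_def)

lemma idx_lt: "i < k \<Longrightarrow> a < (m::nat) \<Longrightarrow> i*m+a < k*m"
proof -
  assume "i < k" "a < m"
  then have "i*m + a < i*m + m" by simp
  also have "\<dots> = Suc i * m" by simp
  also have "\<dots> \<le> k*m" using \<open>i < k\<close> by (intro mult_le_mono1) simp
  finally show ?thesis .
qed

lemma block_entry': "i < k \<Longrightarrow> a < m \<Longrightarrow> j < k \<Longrightarrow> b < m \<Longrightarrow> block k m V $$ (i*m+a, j*m+b) = V i j $$ (a, b)"
  by (simp add: block_entry idx_lt)



lemma idx_split: "I < k*(m::nat) \<Longrightarrow> I div m < k \<and> I mod m < m \<and> I = I div m * m + I mod m"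
  by (metis div_mult_mod_eq less_mult_imp_div_less mod_less_divisor mult_zero_right
      nat_neq_iff not_less_zero)

lemma blockdiag_entry: "i < k \<Longrightarrow> a < m \<Longrightarrow> j < k \<Longrightarrow> b < m \<Longrightarrow>
   blockdiag k m U $$ (i*m+a, j*m+b) = (if i = j then U $$ (a,b) else 0)"
  by (simp add: blockdiag_def block_entry')

lemma blockmul:
  assumes U: "U \<in> carrier_mat m m" and V: "\<And>i j. i < k \<Longrightarrow> j < k \<Longrightarrow> V i j \<in> carrier_mat m m"
  shows "adj (blockdiag k m U) * block k m V = block k m (\<lambda>i j. adj U * V i j)"
proof (rule eq_matI)
  have BD: "blockdiag k m U \<in> carrier_mat (k*m) (k*m)" by (simp add: blockdiag_def block_carrier)
  have B: "block k m V \<in> carrier_mat (k*m) (k*m)" by (simp add: block_carrier)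
  show "dim_row (adj (blockdiag k m U) * block k m V) = dim_row (block k m (\<lambda>i j. adj U * V i j))"
    using adj_carrier[OF BD] by (simp add: block_def)
  show "dim_col (adj (blockdiag k m U) * block k m V) = dim_col (block k m (\<lambda>i j. adj U * V i j))"
    using adj_carrier[OF BD] by (simp add: block_def)
  fix I J assume "I < dim_row (block k m (\<lambda>i j. adj U * V i j))" "J < dim_col (block k m (\<lambda>i j. adj U * V i j))"
  then have IJ: "I < k*m" "J < k*m" by (auto simp: block_def)
  define i a j b where "i = I div m" "a = I mod m" "j = J div m" "b = J mod m"
  have ia: "i < k" "a < m" "I = i*m+a" using idx_split[OF IJ(1)] i_a_j_b_def by auto
  have jb: "j < k" "b < m" "J = j*m+b" using idx_split[OF IJ(2)] i_a_j_b_def by auto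
  have "(adj (blockdiag k m U) * block k m V) $$ (I,J) =
      (\<Sum>L<k*m. adj (blockdiag k m U) $$ (I,L) * block k m V $$ (L,J))"
    by (rule mult_entry[OF adj_carrier[OF BD] B IJ])
  also have "\<dots> = (\<Sum>l<k. \<Sum>c<m. adj (blockdiag k m U) $$ (I,l*m+c) * block k m V $$ (l*m+c,J))"
    by (rule sum_split)
  also have "\<dots> = (\<Sum>l<k. \<Sum>c<m. (if l = i then cnj (U $$ (c,a)) * V i j $$ (c,b) else 0))"
  proof (intro sum.cong refl)
    fix l c assume "l \<in> {..<k}" "c \<in> {..<m}"
    then have lc: "l < k" "c < m" by auto
    have "adj (blockdiag k m U) $$ (I,l*m+c) = cnj (blockdiag k m U $$ (l*m+c, i*m+a))"
      using adj_entry[OF BD] IJ idx_lt[OF lc] ia by simp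
    also have "\<dots> = (if l = i then cnj (U $$ (c,a)) else 0)"
      using blockdiag_entry[OF lc ia(1,2)] by simp
    finally show "adj (blockdiag k m U) $$ (I,l*m+c) * block k m V $$ (l*m+c,J) =
        (if l = i then cnj (U $$ (c,a)) * V i j $$ (c,b) else 0)"
      using block_entry'[OF lc jb(1,2)] jb(3) by simp
  qed
  also have "\<dots> = (\<Sum>c<m. cnj (U $$ (c,a)) * V i j $$ (c,b))"
    using ia(1) by (subst sum.swap) simp
  also have "\<dots> = (adj U * V i j) $$ (a,b)"
    using mult_entry[OF adj_carrier[OF U] V[OF ia(1) jb(1)] ia(2) jb(2)] adj_entry[OF U] ia(2)
    by simp
  also have "\<dots> = block k m (\<lambda>i j. adj U * V i j) $$ (I,J)"
    using block_entry'[OF ia(1,2) jb(1,2)] ia(3) jb(3) by simp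
  finally show "(adj (blockdiag k m U) * block k m V) $$ (I,J) = block k m (\<lambda>i j. adj U * V i j) $$ (I,J)" .
qed



lemma unit_mat_carrier: "unit_mat m i j \<in> carrier_mat m m"
  by (simp add: unit_mat_def)

lemma lin_comp:
  assumes L: "lin_map m n \<psi>" and UA: "UA \<in> carrier_mat m m" and UB: "UB \<in> carrier_mat n n"
  shows "lin_map m n (\<lambda>X. adj UB * \<psi> (UA * X))"
proof -
  have aUB: "adj UB \<in> carrier_mat n n" using adj_carrier[OF UB] .
  have c: "\<And>A. A \<in> carrier_mat m m \<Longrightarrow> \<psi> A \<in> carrier_mat n n"
    and a: "\<And>A B. A \<in> carrier_mat m m \<Longrightarrow> B \<in> carrier_mat m m \<Longrightarrow> \<psi> (A + B) = \<psi> A + \<psi> B"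
    and s: "\<And>c A. A \<in> carrier_mat m m \<Longrightarrow> \<psi> (c \<cdot>\<^sub>m A) = c \<cdot>\<^sub>m \<psi> A"
    using L unfolding lin_map_def by auto
  show ?thesis unfolding lin_map_def
  proof (intro conjI ballI allI)
    fix A :: "complex mat" assume A: "A \<in> carrier_mat m m"
    show "adj UB * \<psi> (UA * A) \<in> carrier_mat n n"
      using aUB c[of "UA * A"] UA A by simp
  next
    fix A B :: "complex mat" assume A: "A \<in> carrier_mat m m" and B: "B \<in> carrier_mat m m"
    have "UA * (A + B) = UA * A + UA * B" using UA A B by (simp add: mult_add_distrib_mat)
    then show "adj UB * \<psi> (UA * (A + B)) = adj UB * \<psi> (UA * A) + adj UB * \<psi> (UA * B)"
      using a[of "UA * A" "UA * B"] UA A B c[of "UA * A"] c[of "UA * B"] aUB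
      by (simp add: mult_add_distrib_mat)
  next
    fix k and A :: "complex mat" assume A: "A \<in> carrier_mat m m"
    have "UA * (k \<cdot>\<^sub>m A) = k \<cdot>\<^sub>m (UA * A)" using UA A by (simp add: mult_smult_distrib)
    then show "adj UB * \<psi> (UA * (k \<cdot>\<^sub>m A)) = k \<cdot>\<^sub>m (adj UB * \<psi> (UA * A))"
      using s[of "UA * A" k] UA A c[of "UA * A"] aUB by (simp add: mult_smult_distrib)
  qed
qed

lemma idx_dm: "b < (m::nat) \<Longrightarrow> (a*m+b) div m = a \<and> (a*m+b) mod m = b"
  by simp

lemma idx_inj: "b' < (m::nat) \<Longrightarrow> b < m \<Longrightarrow> a'*m+b' = a*m+b \<longleftrightarrow> a' = a \<and> b' = b"
  by (metis idx_dm)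

lemma lin_expand:
  assumes L: "lin_map m n \<phi>" and X: "X \<in> carrier_mat m m" and pq: "p < n" "q < n"
  shows "\<phi> X $$ (p,q) = (\<Sum>a<m. \<Sum>b<m. X $$ (a,b) * \<phi> (unit_mat m a b) $$ (p,q))"
proof -
  have c: "\<And>A. A \<in> carrier_mat m m \<Longrightarrow> \<phi> A \<in> carrier_mat n n"
    and ad: "\<And>A B. A \<in> carrier_mat m m \<Longrightarrow> B \<in> carrier_mat m m \<Longrightarrow> \<phi> (A + B) = \<phi> A + \<phi> B"
    and s: "\<And>c A. A \<in> carrier_mat m m \<Longrightarrow> \<phi> (c \<cdot>\<^sub>m A) = c \<cdot>\<^sub>m \<phi> A"
    using L unfolding lin_map_def by auto
  define Xp where "Xp L = mat m m (\<lambda>(a,b). if a*m+b < L then X$$(a,b) else 0)" for L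
  have Xpc: "Xp L \<in> carrier_mat m m" for L by (simp add: Xp_def)
  have ind: "L \<le> m*m \<Longrightarrow> \<phi> (Xp L) $$ (p,q) =
      (\<Sum>t<L. X $$ (t div m, t mod m) * \<phi> (unit_mat m (t div m) (t mod m)) $$ (p,q))" for L
  proof (induction L)
    case 0
    have "Xp 0 = 0 \<cdot>\<^sub>m Xp 0" by (rule eq_matI) (auto simp: Xp_def)
    then have e0: "\<phi> (Xp 0) = 0 \<cdot>\<^sub>m \<phi> (Xp 0)" using s[OF Xpc] by metis
    have d: "dim_row (\<phi> (Xp 0)) = n" "dim_col (\<phi> (Xp 0)) = n" using c[OF Xpc] by auto
    have "\<phi> (Xp 0) $$ (p,q) = 0" by (subst e0) (simp add: d pq)
    then show ?case by simp
  next
    case (Suc L)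
    define a b where "a = L div m" "b = L mod m"
    have ab: "a < m" "b < m" "L = a*m+b" using idx_split[of L m m] Suc.prems a_b_def by auto
    have eq: "Xp (Suc L) = Xp L + X $$ (a,b) \<cdot>\<^sub>m unit_mat m a b"
    proof (rule eq_matI)
      fix a' b' assume "a' < dim_row (Xp L + X $$ (a,b) \<cdot>\<^sub>m unit_mat m a b)"
        "b' < dim_col (Xp L + X $$ (a,b) \<cdot>\<^sub>m unit_mat m a b)"
      then have ab': "a' < m" "b' < m" by (auto simp: unit_mat_def)
      have "a'*m+b' = a*m+b \<longleftrightarrow> a' = a \<and> b' = b"
        using idx_inj[of b' m b a' a] ab ab' by simp
      then show "Xp (Suc L) $$ (a',b') = (Xp L + X $$ (a,b) \<cdot>\<^sub>m unit_mat m a b) $$ (a',b')"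
        using ab ab' by (auto simp: Xp_def unit_mat_def)
    qed (auto simp: Xp_def unit_mat_def)
    have "\<phi> (Xp (Suc L)) = \<phi> (Xp L) + X $$ (a,b) \<cdot>\<^sub>m \<phi> (unit_mat m a b)"
      unfolding eq using ad[OF Xpc, of "X $$ (a,b) \<cdot>\<^sub>m unit_mat m a b"] s[OF unit_mat_carrier]
      by (simp add: unit_mat_carrier)
    then have "\<phi> (Xp (Suc L)) $$ (p,q) = \<phi> (Xp L) $$ (p,q) + X $$ (a,b) * \<phi> (unit_mat m a b) $$ (p,q)"
      using c[OF unit_mat_carrier, of a b] pq by simp
    moreover have IH: "\<phi> (Xp L) $$ (p,q) =
      (\<Sum>t<L. X $$ (t div m, t mod m) * \<phi> (unit_mat m (t div m) (t mod m)) $$ (p,q))"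
      using Suc.IH Suc.prems by simp
    moreover have "X $$ (L div m, L mod m) * \<phi> (unit_mat m (L div m) (L mod m)) $$ (p,q) =
       X $$ (a,b) * \<phi> (unit_mat m a b) $$ (p,q)" by (simp only: a_b_def)
    ultimately show ?case by (simp only: sum.lessThan_Suc)
  qed
  have "Xp (m*m) = X"
    by (rule eq_matI) (use X idx_lt in \<open>auto simp: Xp_def\<close>)
  then have "\<phi> X $$ (p,q) = (\<Sum>t<m*m. X $$ (t div m, t mod m) * \<phi> (unit_mat m (t div m) (t mod m)) $$ (p,q))"
    using ind[of "m*m"] by simp
  also have "\<dots> = (\<Sum>a<m. \<Sum>b<m. X $$ (a,b) * \<phi> (unit_mat m a b) $$ (p,q))"
    unfolding sum_split by (intro sum.cong refl) auto
  finally show ?thesis .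
qed

lemma unit_block_psd: "psd (m*m) (block m m (\<lambda>i j. unit_mat m i j))"
proof -
  define P where "P I = (I mod m = I div m)" for I
  have ent: "block m m (\<lambda>i j. unit_mat m i j) $$ (I,J) = (if P I \<and> P J then 1 else 0)"
    if "I < m*m" "J < m*m" for I J
    using that idx_split[of I m m] idx_split[of J m m]
    by (simp add: block_entry unit_mat_def P_def)
  show ?thesis unfolding psd_iff psdf_def
  proof (intro conjI ballI allI)
    show "block m m (\<lambda>i j. unit_mat m i j) \<in> carrier_mat (m*m) (m*m)" by (rule block_carrier)
  next
    fix I J assume "I \<in> {..<m*m}" "J \<in> {..<m*m}"
    then show "block m m (\<lambda>i j. unit_mat m i j) $$ (J,I) = cnj (block m m (\<lambda>i j. unit_mat m i j) $$ (I,J))"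
      using ent by auto
  next
    fix v :: "nat \<Rightarrow> complex"
    define s where "s = (\<Sum>J<m*m. if P J then v J else 0)"
    have cs: "cnj s = (\<Sum>I<m*m. cnj (if P I then v I else 0))" unfolding s_def by simp
    have "qf {..<m*m} (\<lambda>I J. block m m (\<lambda>i j. unit_mat m i j) $$ (I,J)) v = cnj s * s"
      unfolding cs unfolding s_def sum_product qf_def
      by (intro sum.cong refl) (auto simp: ent)
    moreover have "0 \<le> Re (cnj s * s)" by simp
    ultimately show "0 \<le> Re (qf {..<m*m} (\<lambda>I J. block m m (\<lambda>i j. unit_mat m i j) $$ (I,J)) v)" by simp
  qed
qed



lemma reorder7:
  fixes F :: "nat \<Rightarrow> nat \<Rightarrow> nat \<Rightarrow> nat \<Rightarrow> nat \<Rightarrow> nat \<Rightarrow> nat \<Rightarrow> complex"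
  shows "(\<Sum>i<k. \<Sum>p<n. \<Sum>j<k. \<Sum>q<n. \<Sum>a<m. \<Sum>b<m. \<Sum>r<N. F i p j q a b r) =
         (\<Sum>r<N. \<Sum>i<k. \<Sum>a<m. \<Sum>j<k. \<Sum>b<m. \<Sum>p<n. \<Sum>q<n. F i p j q a b r)"
  apply (simp add: sum.cartesian_product)
  apply (rule sum.reindex_bij_witness[where i="\<lambda>(r,i,a,j,b,p,q). (i,p,j,q,a,b,r)" and j="\<lambda>(i,p,j,q,a,b,r). (r,i,a,j,b,p,q)"])
  apply auto
  done


lemma key:
  fixes Wf Cf cs :: "nat \<Rightarrow> nat \<Rightarrow> complex" and v :: "nat \<Rightarrow> complex" and N :: nat
  assumes W: "psdf {..<k*m} Wf"
  and C: "\<And>a p b q. a<m \<Longrightarrow> p<n \<Longrightarrow> b<m \<Longrightarrow> q<n \<Longrightarrow>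
     Cf (a*n+p) (b*n+q) = (\<Sum>r<N. cs r (a*n+p) * cnj (cs r (b*n+q)))"
  shows "0 \<le> Re (\<Sum>I<k*n. \<Sum>J<k*n. cnj (v I) * (\<Sum>a<m. \<Sum>b<m.
      Wf ((I div n)*m+a) ((J div n)*m+b) * Cf (a*n + I mod n) (b*n + J mod n)) * v J)"
proof -
  define F where "F i p j q a b r = cnj (v (i*n+p)) * Wf (i*m+a) (j*m+b) * cs r (a*n+p)
     * cnj (cs r (b*n+q)) * v (j*n+q)" for i p j q a b r
  define y where "y r L = (\<Sum>p<n. cnj (cs r ((L mod m)*n+p)) * v ((L div m)*n+p))" for r L
  have LHS: "(\<Sum>I<k*n. \<Sum>J<k*n. cnj (v I) * (\<Sum>a<m. \<Sum>b<m.
      Wf ((I div n)*m+a) ((J div n)*m+b) * Cf (a*n + I mod n) (b*n + J mod n)) * v J) =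
    (\<Sum>i<k. \<Sum>p<n. \<Sum>j<k. \<Sum>q<n. \<Sum>a<m. \<Sum>b<m. \<Sum>r<N. F i p j q a b r)"
    unfolding sum_split
  proof (intro sum.cong refl)
    fix i p j q assume "i \<in> {..<k}" "p \<in> {..<n}" "j \<in> {..<k}" "q \<in> {..<n}"
    then have ipjq: "p < n" "q < n" by auto
    have "cnj (v (i*n+p)) * (\<Sum>a<m. \<Sum>b<m. Wf (i*m+a) (j*m+b) * Cf (a*n + p) (b*n + q)) * v (j*n+q)
      = cnj (v (i*n+p)) * (\<Sum>a<m. \<Sum>b<m. Wf (i*m+a) (j*m+b) * (\<Sum>r<N. cs r (a*n+p) * cnj (cs r (b*n+q)))) * v (j*n+q)"
      using C ipjq by (intro arg_cong2[where f="(*)"] refl sum.cong) auto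
    also have "\<dots> = (\<Sum>a<m. \<Sum>b<m. \<Sum>r<N. F i p j q a b r)"
      unfolding F_def by (simp add: sum_distrib_left sum_distrib_right mult_ac)
    finally show "cnj (v (i*n+p)) * (\<Sum>a<m. \<Sum>b<m. Wf ((i*n+p) div n*m+a) ((j*n+q) div n*m+b) *
        Cf (a*n + (i*n+p) mod n) (b*n + (j*n+q) mod n)) * v (j*n+q) = (\<Sum>a<m. \<Sum>b<m. \<Sum>r<N. F i p j q a b r)"
      using ipjq idx_dm by simp
  qed
  have RHS: "(\<Sum>r<N. qf {..<k*m} Wf (y r)) =
     (\<Sum>r<N. \<Sum>i<k. \<Sum>a<m. \<Sum>j<k. \<Sum>b<m. \<Sum>p<n. \<Sum>q<n. F i p j q a b r)"
    unfolding qf_def sum_split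
  proof (intro sum.cong refl)
    fix r i a j b assume "r \<in> {..<N}" "i \<in> {..<k}" "a \<in> {..<m}" "j \<in> {..<k}" "b \<in> {..<m}"
    then have ab: "a < m" "b < m" by auto
    have "cnj (y r (i*m+a)) * Wf (i*m+a) (j*m+b) * y r (j*m+b) =
      (\<Sum>p<n. cs r (a*n+p) * cnj (v (i*n+p))) * Wf (i*m+a) (j*m+b) * (\<Sum>q<n. cnj (cs r (b*n+q)) * v (j*n+q))"
      unfolding y_def using ab idx_dm by simp
    also have "\<dots> = (\<Sum>p<n. \<Sum>q<n. F i p j q a b r)"
      unfolding F_def by (simp add: sum_distrib_left sum_distrib_right mult_ac)
    finally show "cnj (y r (i*m+a)) * Wf (i*m+a) (j*m+b) * y r (j*m+b) = (\<Sum>p<n. \<Sum>q<n. F i p j q a b r)" .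
  qed
  have "0 \<le> Re (\<Sum>r<N. qf {..<k*m} Wf (y r))"
    using W unfolding psdf_def by (simp add: Re_sum sum_nonneg)
  then show ?thesis unfolding LHS RHS[symmetric] reorder7 .
qed



theorem theorem3p2:
  fixes m n :: nat and UA UB :: "complex mat" and \<psi> :: "complex mat \<Rightarrow> complex mat"
  assumes "unitary_mat m UA" and "unitary_mat n UB" and "lin_map m n \<psi>"
  shows "UCP m n UA UB \<psi> \<longleftrightarrow>
         psd (m*n) (block m n (\<lambda>i j. adj UB * \<psi> (UA * unit_mat m i j)))"
proof -
  have UA: "UA \<in> carrier_mat m m" and UA1: "adj UA * UA = 1\<^sub>m m" and UA2: "UA * adj UA = 1\<^sub>m m"
    using assms(1) unfolding unitary_mat_def by auto
  have UB: "UB \<in> carrier_mat n n"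
    using assms(2) unfolding unitary_mat_def by auto
  have aUA: "adj UA \<in> carrier_mat m m" using adj_carrier[OF UA] .
  have aUB: "adj UB \<in> carrier_mat n n" using adj_carrier[OF UB] .
  have psic: "\<And>A. A \<in> carrier_mat m m \<Longrightarrow> \<psi> A \<in> carrier_mat n n"
    using assms(3) unfolding lin_map_def by auto
  define \<phi> where "\<phi> X = adj UB * \<psi> (UA * X)" for X
  have Lphi: "lin_map m n \<phi>" unfolding \<phi>_def by (rule lin_comp[OF assms(3) UA UB])
  define Ch where "Ch = block m n (\<lambda>i j. adj UB * \<psi> (UA * unit_mat m i j))"
  show ?thesis
  proof
    assume U: "UCP m n UA UB \<psi>"
    define V where "V i j = UA * unit_mat m i j" for i j
    have Vc: "V i j \<in> carrier_mat m m" for i j using UA unit_mat_carrier by (simp add: V_def)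
    have e: "adj UA * V i j = unit_mat m i j" for i j
      unfolding V_def using assoc_mult_mat[OF aUA UA unit_mat_carrier, of i j] UA1
      by (simp add: unit_mat_carrier left_mult_one_mat[OF unit_mat_carrier])
    have "adj (blockdiag m m UA) * block m m V = block m m (\<lambda>i j. unit_mat m i j)"
      using blockmul[OF UA Vc, of m] e by simp
    then have "psd (m*m) (adj (blockdiag m m UA) * block m m V)" using unit_block_psd by simp
    then have "psd (m*n) (adj (blockdiag m n UB) * block m n (\<lambda>i j. \<psi> (V i j)))"
      using U Vc unfolding UCP_def by blast
    moreover have "adj (blockdiag m n UB) * block m n (\<lambda>i j. \<psi> (V i j)) = Ch"
      unfolding Ch_def using blockmul[OF UB, of m "\<lambda>i j. \<psi> (V i j)"] psic[OF Vc] V_def by simp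
    ultimately show "psd (m*n) (block m n (\<lambda>i j. adj UB * \<psi> (UA * unit_mat m i j)))"
      unfolding Ch_def by simp
  next
    assume P: "psd (m*n) (block m n (\<lambda>i j. adj UB * \<psi> (UA * unit_mat m i j)))"
    define Cf where "Cf I J = Ch $$ (I,J)" for I J
    have "psdf {..<m*n} Cf" using P unfolding psd_iff Cf_def Ch_def by simp
    then obtain N :: nat and cs where cs: "\<forall>I\<in>{..<m*n}. \<forall>J\<in>{..<m*n}. Cf I J = (\<Sum>r<N. cs r I * cnj (cs r J))"
      using psdf_decomp[of "{..<m*n}" Cf] by auto
    have Cfe: "Cf (a*n+p) (b*n+q) = \<phi> (unit_mat m a b) $$ (p,q)" if "a<m" "p<n" "b<m" "q<n" for a p b q
      unfolding Cf_def Ch_def \<phi>_def using block_entry'[OF that] by simp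
    show "UCP m n UA UB \<psi>" unfolding UCP_def
    proof (intro allI impI, elim conjE)
      fix k and V :: "nat \<Rightarrow> nat \<Rightarrow> complex mat"
      assume Vc: "\<forall>i<k. \<forall>j<k. V i j \<in> carrier_mat m m"
        and PV: "psd (k*m) (adj (blockdiag k m UA) * block k m V)"
      define W where "W i j = adj UA * V i j" for i j
      have Wc: "i < k \<Longrightarrow> j < k \<Longrightarrow> W i j \<in> carrier_mat m m" for i j
        using Vc aUA by (simp add: W_def)
      have "psd (k*m) (block k m W)" using PV blockmul[OF UA, of k V] Vc unfolding W_def by simp
      then have Wp: "psdf {..<k*m} (\<lambda>I J. block k m W $$ (I,J))" unfolding psd_iff by simp
      define Wf where "Wf I J = block k m W $$ (I,J)" for I J
      define G where "G I J = (\<Sum>a<m. \<Sum>b<m. Wf ((I div n)*m+a) ((J div n)*m+b) * Cf (a*n + I mod n) (b*n + J mod n))" for I J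
      have VW: "i < k \<Longrightarrow> j < k \<Longrightarrow> adj UB * \<psi> (V i j) = \<phi> (W i j)" for i j
      proof -
        assume "i < k" "j < k"
        then have Vij: "V i j \<in> carrier_mat m m" using Vc by simp
        have "UA * (adj UA * V i j) = V i j"
          using assoc_mult_mat[OF UA aUA Vij] UA2 left_mult_one_mat[OF Vij] by simp
        then show ?thesis unfolding \<phi>_def W_def by simp
      qed
      have ent: "block k n (\<lambda>i j. adj UB * \<psi> (V i j)) $$ (I,J) = G I J" if IJ: "I < k*n" "J < k*n" for I J
      proof -
        define i p j q where "i = I div n" "p = I mod n" "j = J div n" "q = J mod n"
        have ip: "i < k" "p < n" using idx_split[OF IJ(1)] i_p_j_q_def by auto
        have jq: "j < k" "q < n" using idx_split[OF IJ(2)] i_p_j_q_def by auto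
        have "block k n (\<lambda>i j. adj UB * \<psi> (V i j)) $$ (I,J) = \<phi> (W i j) $$ (p,q)"
          using block_entry[OF IJ] VW[OF ip(1) jq(1)] i_p_j_q_def by simp
        also have "\<dots> = (\<Sum>a<m. \<Sum>b<m. W i j $$ (a,b) * \<phi> (unit_mat m a b) $$ (p,q))"
          by (rule lin_expand[OF Lphi Wc[OF ip(1) jq(1)] ip(2) jq(2)])
        also have "\<dots> = G I J"
          unfolding G_def i_p_j_q_def[symmetric]
          by (intro sum.cong refl) (simp add: Wf_def block_entry' ip jq Cfe)
        finally show ?thesis .
      qed
      have GH: "G J I = cnj (G I J)" if "I < k*n" "J < k*n" for I J
      proof -
        have WH0: "\<forall>i\<in>{..<k*m}. \<forall>j\<in>{..<k*m}. Wf j i = cnj (Wf i j)"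
          using Wp unfolding psdf_def Wf_def by (rule conjunct1)
        have WH: "\<And>I J. I < k*m \<Longrightarrow> J < k*m \<Longrightarrow> Wf J I = cnj (Wf I J)"
          using WH0 lessThan_iff by blast
        have CP: "psdf {..<m*n} Cf" using P unfolding psd_iff Cf_def Ch_def by (rule conjunct2)
        have CH0: "\<forall>i\<in>{..<m*n}. \<forall>j\<in>{..<m*n}. Cf j i = cnj (Cf i j)"
          using CP unfolding psdf_def by (rule conjunct1)
        have CH: "\<And>I J. I < m*n \<Longrightarrow> J < m*n \<Longrightarrow> Cf J I = cnj (Cf I J)"
          using CH0 lessThan_iff by blast
        have ip: "I div n < k" "I mod n < n" using idx_split[OF that(1)] by auto
        have jq: "J div n < k" "J mod n < n" using idx_split[OF that(2)] by auto
        have "cnj (G I J) = (\<Sum>a<m. \<Sum>b<m. Wf ((J div n)*m+b) ((I div n)*m+a) * Cf (b*n + J mod n) (a*n + I mod n))"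
          unfolding G_def cnj_sum
        proof (intro sum.cong refl)
          fix a b assume "a \<in> {..<m}" "b \<in> {..<m}"
          then have ab: "a < m" "b < m" by auto
          have w: "cnj (Wf ((I div n)*m+a) ((J div n)*m+b)) = Wf ((J div n)*m+b) ((I div n)*m+a)"
            using WH[OF idx_lt[OF jq(1) ab(2)] idx_lt[OF ip(1) ab(1)]] by simp
          have c: "cnj (Cf (a*n + I mod n) (b*n + J mod n)) = Cf (b*n + J mod n) (a*n + I mod n)"
            using CH[OF idx_lt[OF ab(2) jq(2)] idx_lt[OF ab(1) ip(2)]] by simp
          show "cnj (Wf ((I div n)*m+a) ((J div n)*m+b) * Cf (a*n + I mod n) (b*n + J mod n)) =
              Wf ((J div n)*m+b) ((I div n)*m+a) * Cf (b*n + J mod n) (a*n + I mod n)"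
            using w c by simp
        qed
        also have "\<dots> = G J I" unfolding G_def by (rule sum.swap)
        finally show ?thesis by simp
      qed
      show "psd (k*n) (adj (blockdiag k n UB) * block k n (\<lambda>i j. \<psi> (V i j)))"
      proof -
        have "adj (blockdiag k n UB) * block k n (\<lambda>i j. \<psi> (V i j)) = block k n (\<lambda>i j. adj UB * \<psi> (V i j))"
          using blockmul[OF UB, of k "\<lambda>i j. \<psi> (V i j)"] psic Vc by simp
        moreover have "psd (k*n) (block k n (\<lambda>i j. adj UB * \<psi> (V i j)))"
          unfolding psd_iff psdf_def
        proof (intro conjI ballI allI)
          show "block k n (\<lambda>i j. adj UB * \<psi> (V i j)) \<in> carrier_mat (k*n) (k*n)" by (rule block_carrier)
        next
          fix I J assume "I \<in> {..<k*n}" "J \<in> {..<k*n}"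
          then have IJ: "I < k*n" "J < k*n" by auto
          show "block k n (\<lambda>i j. adj UB * \<psi> (V i j)) $$ (J,I) = cnj (block k n (\<lambda>i j. adj UB * \<psi> (V i j)) $$ (I,J))"
            unfolding ent[OF IJ] ent[OF IJ(2,1)] by (rule GH[OF IJ])
        next
          fix v :: "nat \<Rightarrow> complex"
          have "qf {..<k*n} (\<lambda>I J. block k n (\<lambda>i j. adj UB * \<psi> (V i j)) $$ (I,J)) v = qf {..<k*n} G v"
            unfolding qf_def by (intro sum.cong refl) (simp add: ent)
          moreover have "0 \<le> Re (qf {..<k*n} G v)"
            unfolding qf_def G_def
          proof (rule key[where k=k and m=m and n=n and Wf=Wf and Cf=Cf and N=N and cs=cs and v=v])
            show "psdf {..<k*m} Wf" using Wp unfolding Wf_def .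
          next
            fix a p b q assume "a < m" "p < n" "b < m" "q < n"
            then show "Cf (a*n+p) (b*n+q) = (\<Sum>r<N. cs r (a*n+p) * cnj (cs r (b*n+q)))"
              using cs idx_lt by simp
          qed
          ultimately show "0 \<le> Re (qf {..<k*n} (\<lambda>I J. block k n (\<lambda>i j. adj UB * \<psi> (V i j)) $$ (I,J)) v)"
            by simp
        qed
        ultimately show ?thesis by simp
      qed
    qed
  qed
qed

end
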